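(* Let $n\ge2$, let $f:2^{[n]}\to\mathbb{R}_+$ be monotone submodular, and let $\mathbf{x}\in[0,1]^n$ with $0\le x_1\le x_2\le\dots\le x_n\le1$. If either (i) $\sum_{i=1}^{n-1}x_i\le1$ and $x_n\le1/4$, or (ii) $\sum_{i=2}^{n}x_i\ge n-2$ and $x_1\ge3/4$, then $f^{+}(\mathbf{x})/f^{++}(\mathbf{x})\le4/3$ (with the convention $0/0=1$).
   Context: $[n]=\{1,\dots,n\}$. A set function $f:2^{[n]}\to\mathbb{R}_+$ is monotone if $f(S)\le f(T)$ for $S\subseteq T$, submodular if $f(S)+f(T)\ge f(S\cap T)+f(S\cup T)$. For $\mathbf{x}\in[0,1]^n$: the concave closure $f^{+}(\mathbf{x})=\max\sum_{S\subseteq[n]}\theta(S)f(S)$ over $\theta:2^{[n]}\to\mathbb{R}_{\ge0}$ with $\sum_S\theta(S)=1$ and $\sum_{S\ni i}\theta(S)=x_i$ for all $i$; the upper pairwise independent extension $f^{++}(\mathbf{x})$ is the same maximum with the additional constraints $\sum_{S\ni i,j}\theta(S)=x_ix_j$ for all $i<j$. *)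

theory Defs
  imports Complex_Main
begin

text \<open>Ground set [n] = {1..n}; set functions are f :: nat set => real, considered on Pow {1..n}.\<close>

definition monotone_setfun :: "nat \<Rightarrow> (nat set \<Rightarrow> real) \<Rightarrow> bool" where
  "monotone_setfun n f \<longleftrightarrow>
     (\<forall>S T. S \<subseteq> T \<and> T \<subseteq> {1..n} \<longrightarrow> f S \<le> f T)"

definition submodular_setfun :: "nat \<Rightarrow> (nat set \<Rightarrow> real) \<Rightarrow> bool" where
  "submodular_setfun n f \<longleftrightarrow>
     (\<forall>S T. S \<subseteq> {1..n} \<and> T \<subseteq> {1..n} \<longrightarrow> f S + f T \<ge> f (S \<inter> T) + f (S \<union> T))"

definition nonneg_setfun :: "nat \<Rightarrow> (nat set \<Rightarrow> real) \<Rightarrow> bool" where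
  "nonneg_setfun n f \<longleftrightarrow> (\<forall>S. S \<subseteq> {1..n} \<longrightarrow> f S \<ge> 0)"

definition concave_feasible :: "nat \<Rightarrow> (nat \<Rightarrow> real) \<Rightarrow> (nat set \<Rightarrow> real) \<Rightarrow> bool" where
  "concave_feasible n x \<theta> \<longleftrightarrow>
     (\<forall>S \<in> Pow {1..n}. \<theta> S \<ge> 0) \<and>
     (\<Sum>S \<in> Pow {1..n}. \<theta> S) = 1 \<and>
     (\<forall>i \<in> {1..n}. (\<Sum>S \<in> {S \<in> Pow {1..n}. i \<in> S}. \<theta> S) = x i)"

definition pairwise_feasible :: "nat \<Rightarrow> (nat \<Rightarrow> real) \<Rightarrow> (nat set \<Rightarrow> real) \<Rightarrow> bool" where
  "pairwise_feasible n x \<theta> \<longleftrightarrow>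
     concave_feasible n x \<theta> \<and>
     (\<forall>i \<in> {1..n}. \<forall>j \<in> {1..n}. i < j \<longrightarrow>
        (\<Sum>S \<in> {S \<in> Pow {1..n}. i \<in> S \<and> j \<in> S}. \<theta> S) = x i * x j)"

text \<open>The maxima are taken as suprema of the (compact, nonempty) feasible value sets.\<close>
definition concave_closure :: "nat \<Rightarrow> (nat set \<Rightarrow> real) \<Rightarrow> (nat \<Rightarrow> real) \<Rightarrow> real" where
  "concave_closure n f x =
     Sup {(\<Sum>S \<in> Pow {1..n}. \<theta> S * f S) | \<theta>. concave_feasible n x \<theta>}"

definition upper_pairwise_ext :: "nat \<Rightarrow> (nat set \<Rightarrow> real) \<Rightarrow> (nat \<Rightarrow> real) \<Rightarrow> real" where
  "upper_pairwise_ext n f x =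
     Sup {(\<Sum>S \<in> Pow {1..n}. \<theta> S * f S) | \<theta>. pairwise_feasible n x \<theta>}"

end

theory Submission
  imports Defs
begin

definition prodw :: "nat set \<Rightarrow> (nat \<Rightarrow> real) \<Rightarrow> nat set \<Rightarrow> real" where
  "prodw N y X = (\<Prod>i\<in>X. y i) * (\<Prod>i\<in>N-X. 1 - y i)"

definition Dist :: "nat set \<Rightarrow> real \<Rightarrow> (nat \<Rightarrow> real) \<Rightarrow> nat set \<Rightarrow> real" where
  "Dist N b z C = b^2 * prodw N (\<lambda>i. z i / b) C
     + (\<Sum>i\<in>N. if C = {i} then (1-b) * z i else 0)
     + (if C = {} then 1 - b^2 - (1-b) * sum z N else 0)"

lemma prodw_K:
  assumes "finite N" "K \<subseteq> N"
  shows "(\<Sum>C\<in>Pow N. prodw N y C * of_bool (K \<subseteq> C)) = prod y K"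
proof -
  let ?f2 = "\<lambda>j. if j \<in> K then 0 else 1 - y j"
  have "(\<Prod>j\<in>N. y j + ?f2 j) = (\<Sum>X\<in>Pow N. (\<Prod>j\<in>X. y j) * (\<Prod>j\<in>N-X. ?f2 j))"
    by (rule prod_add[OF assms(1)])
  also have "\<dots> = (\<Sum>C\<in>Pow N. prodw N y C * of_bool (K \<subseteq> C))"
  proof (rule sum.cong[OF refl])
    fix X assume X: "X \<in> Pow N"
    show "(\<Prod>j\<in>X. y j) * (\<Prod>j\<in>N-X. ?f2 j) = prodw N y X * of_bool (K \<subseteq> X)"
    proof (cases "K \<subseteq> X")
      case True
      then have "(\<Prod>j\<in>N-X. ?f2 j) = (\<Prod>j\<in>N-X. 1 - y j)"
        by (intro prod.cong) auto
      then show ?thesis using True by (simp add: prodw_def)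
    next
      case False
      then obtain j where "j \<in> K" "j \<notin> X" by auto
      then have "j \<in> N - X" using assms by auto
      then have "(\<Prod>j\<in>N-X. ?f2 j) = 0"
        using \<open>j \<in> K\<close> assms(1) by (intro prod_zero) auto
      then show ?thesis using False by simp
    qed
  qed
  finally have 1: "(\<Sum>C\<in>Pow N. prodw N y C * of_bool (K \<subseteq> C)) = (\<Prod>j\<in>N. y j + ?f2 j)" ..
  have "(\<Prod>j\<in>N. y j + ?f2 j) = (\<Prod>j\<in>N. if j \<in> K then y j else 1)"
    by (intro prod.cong) auto
  also have "\<dots> = prod y K"
    using assms by (simp add: prod.If_cases Int_absorb1)
  finally show ?thesis using 1 by simp
qed

lemma dist_sum:
  assumes "finite N"
  shows "(\<Sum>C\<in>Pow N. Dist N b z C * g C) =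
     b^2 * (\<Sum>C\<in>Pow N. prodw N (\<lambda>i. z i / b) C * g C) + (\<Sum>i\<in>N. (1-b) * z i * g {i})
     + (1 - b^2 - (1-b) * sum z N) * g {}"
proof -
  have A: "(\<Sum>C\<in>Pow N. (\<Sum>i\<in>N. if C = {i} then (1-b) * z i else 0) * g C)
       = (\<Sum>i\<in>N. (1-b) * z i * g {i})"
  proof -
    have "(\<Sum>C\<in>Pow N. (\<Sum>i\<in>N. if C = {i} then (1-b) * z i else 0) * g C)
       = (\<Sum>C\<in>Pow N. \<Sum>i\<in>N. if C = {i} then (1-b) * z i * g C else 0)"
      by (auto simp add: sum_distrib_right intro!: sum.cong)
    also have "\<dots> = (\<Sum>i\<in>N. \<Sum>C\<in>Pow N. if C = {i} then (1-b) * z i * g C else 0)"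
      by (rule sum.swap)
    also have "\<dots> = (\<Sum>i\<in>N. (1-b) * z i * g {i})"
      using assms by (intro sum.cong refl) (simp add: sum.delta)
    finally show ?thesis .
  qed
  have B: "(\<Sum>C\<in>Pow N. (if C = {} then 1 - b^2 - (1-b) * sum z N else 0) * g C)
       = (1 - b^2 - (1-b) * sum z N) * g {}"
  proof -
    have "(\<Sum>C\<in>Pow N. (if C = {} then 1 - b^2 - (1-b) * sum z N else 0) * g C)
       = (\<Sum>C\<in>Pow N. if C = {} then (1 - b^2 - (1-b) * sum z N) * g C else 0)"
      by (intro sum.cong refl) simp
    also have "\<dots> = (1 - b^2 - (1-b) * sum z N) * g {}"
      using assms by (simp add: sum.delta)
    finally show ?thesis .
  qed
  show ?thesis
    unfolding Dist_def distrib_right sum.distrib A B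
    by (simp add: sum_distrib_left mult.assoc)
qed

lemma filt: fixes \<theta> :: "'a \<Rightarrow> real" shows "finite A \<Longrightarrow> sum \<theta> {S\<in>A. P S} = (\<Sum>S\<in>A. \<theta> S * of_bool (P S))"
  by (simp add: sum.inter_filter of_bool_def if_distrib cong: if_cong)

locale distc =
  fixes N :: "nat set" and b :: real and z :: "nat \<Rightarrow> real"
  assumes fin: "finite N" and b0: "0 \<le> b" and b1: "b \<le> 1"
    and zb: "\<And>i. i \<in> N \<Longrightarrow> 0 \<le> z i \<and> z i \<le> b"
    and tot: "b^2 + (1-b) * sum z N \<le> 1"
begin

lemma prodw_nonneg: "prodw N (\<lambda>i. z i / b) C \<ge> 0" if "C \<subseteq> N"
proof -
  have "\<forall>i\<in>N. 0 \<le> z i / b \<and> z i / b \<le> 1"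
    using zb b0 by (auto simp: divide_le_eq)
  then show ?thesis using that unfolding prodw_def
    by (intro mult_nonneg_nonneg prod_nonneg) auto
qed

lemma Dist_nonneg: "C \<subseteq> N \<Longrightarrow> Dist N b z C \<ge> 0"
  unfolding Dist_def
  using prodw_nonneg[of C] zb b1 tot
  by (intro add_nonneg_nonneg mult_nonneg_nonneg sum_nonneg) auto

lemma Dist_K:
  assumes "K \<subseteq> N"
  shows "(\<Sum>C\<in>Pow N. Dist N b z C * of_bool (K \<subseteq> C)) =
     b^2 * prod (\<lambda>i. z i / b) K + (\<Sum>i\<in>N. (1-b) * z i * of_bool (K \<subseteq> {i}))
     + (1 - b^2 - (1-b) * sum z N) * of_bool (K = {})"
  using dist_sum[OF fin, of b z "\<lambda>C. of_bool (K \<subseteq> C)"] prodw_K[OF fin assms]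
  by simp

lemma Dist_total: "(\<Sum>C\<in>Pow N. Dist N b z C) = 1"
  using Dist_K[of "{}"] by (simp add: sum_distrib_left algebra_simps)

lemma Dist_m1:
  assumes "i \<in> N"
  shows "(\<Sum>C\<in>Pow N. Dist N b z C * of_bool (i \<in> C)) = z i"
proof -
  have "(\<Sum>j\<in>N. (1-b) * z j * of_bool ({i} \<subseteq> {j})) = (\<Sum>j\<in>N. if j = i then (1-b) * z j else 0)"
    by (intro sum.cong) auto
  also have "\<dots> = (1-b) * z i" using assms fin by (simp add: sum.delta')
  finally have 1: "(\<Sum>j\<in>N. (1-b) * z j * of_bool ({i} \<subseteq> {j})) = (1-b) * z i" .
  have 2: "b^2 * (z i / b) = b * z i"
    using zb[OF assms] by (cases "b = 0") (auto simp: power2_eq_square)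
  show ?thesis using Dist_K[of "{i}"] assms 1 2 by (simp add: algebra_simps)
qed

lemma Dist_m2:
  assumes "i \<in> N" "j \<in> N" "i \<noteq> j"
  shows "(\<Sum>C\<in>Pow N. Dist N b z C * of_bool (i \<in> C \<and> j \<in> C)) = z i * z j"
proof -
  have 1: "(\<Sum>k\<in>N. (1-b) * z k * of_bool ({i,j} \<subseteq> {k})) = 0"
    using assms by (intro sum.neutral) auto
  have 2: "b^2 * ((z i / b) * (z j / b)) = z i * z j"
    using zb[OF assms(1)] by (cases "b = 0") (auto simp: power2_eq_square)
  show ?thesis using Dist_K[of "{i,j}"] assms 1 2 by simp
qed

end

lemma chain:
  assumes "\<forall>i\<in>{1..<n}. x i \<le> x (i+1)" "1 \<le> i" "i \<le> j" "j \<le> n"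
  shows "(x i :: real) \<le> x (j::nat)"
proof -
  have "j \<le> n \<longrightarrow> x i \<le> x j"
    using assms(3)
  proof (induction j rule: dec_induct)
    case base then show ?case by simp
  next
    case (step k)
    show ?case
    proof
      assume "Suc k \<le> n"
      then have "k \<in> {1..<n}" using step.hyps assms(2) by auto
      then have "x k \<le> x (Suc k)" using assms(1) by auto
      then show "x i \<le> x (Suc k)" using step.IH \<open>Suc k \<le> n\<close> by auto
    qed
  qed
  then show ?thesis using assms(4) by simp
qed

lemma sub_up:
  assumes sm: "submodular_setfun n f"
  shows "S \<subseteq> {1..n} \<Longrightarrow> f S \<le> f {} + (\<Sum>i\<in>S. f {i} - f {})"
proof -
  assume S: "S \<subseteq> {1..n}"
  have "finite S" using S finite_subset by blast
  then show ?thesis using S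
  proof (induction S rule: finite_induct)
    case empty then show ?case by simp
  next
    case (insert a S)
    have "f S + f {a} \<ge> f (S \<inter> {a}) + f (S \<union> {a})"
    proof -
      have "S \<subseteq> {1..n}" "{a} \<subseteq> {1..n}" using insert.prems by auto
      then show ?thesis using sm unfolding submodular_setfun_def by blast
    qed
    moreover have "S \<inter> {a} = {}" "S \<union> {a} = insert a S" using insert.hyps by auto
    ultimately show ?case using insert by simp
  qed
qed

lemma sub_down:
  assumes sm: "submodular_setfun n f"
  shows "R \<subseteq> {1..n} \<Longrightarrow> f ({1..n} - R) + (\<Sum>i\<in>R. f {1..n} - f ({1..n} - {i})) \<le> f {1..n}"
proof -
  assume R: "R \<subseteq> {1..n}"
  have "finite R" using R finite_subset by blast
  then show ?thesis using R
  proof (induction R rule: finite_induct)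
    case empty then show ?case by simp
  next
    case (insert a R)
    let ?N = "{1..n::nat}"
    have "f (?N - R) + f (?N - {a}) \<ge> f ((?N - R) \<inter> (?N - {a})) + f ((?N - R) \<union> (?N - {a}))"
      using sm unfolding submodular_setfun_def by auto
    moreover have "(?N - R) \<inter> (?N - {a}) = ?N - insert a R" by auto
    moreover have "(?N - R) \<union> (?N - {a}) = ?N" using insert by auto
    ultimately show ?case using insert by simp
  qed
qed

lemma final:
  fixes n :: nat and f :: "nat set \<Rightarrow> real" and x :: "nat \<Rightarrow> real"
  assumes nn: "nonneg_setfun n f" and pf: "pairwise_feasible n x \<theta>'"
    and bnd: "\<And>\<theta>. concave_feasible n x \<theta> \<Longrightarrow>
       (\<Sum>S\<in>Pow {1..n}. \<theta> S * f S) \<le> 4/3 * (\<Sum>S\<in>Pow {1..n}. \<theta>' S * f S)"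
  shows "(upper_pairwise_ext n f x = 0 \<longrightarrow> concave_closure n f x = 0) \<and>
         (upper_pairwise_ext n f x \<noteq> 0 \<longrightarrow>
            concave_closure n f x / upper_pairwise_ext n f x \<le> 4/3)"
proof -
  let ?N = "{1..n::nat}"
  define A where "A = {(\<Sum>S \<in> Pow ?N. \<theta> S * f S) | \<theta>. concave_feasible n x \<theta>}"
  define B where "B = {(\<Sum>S \<in> Pow ?N. \<theta> S * f S) | \<theta>. pairwise_feasible n x \<theta>}"
  define v where "v = (\<Sum>S\<in>Pow ?N. \<theta>' S * f S)"
  have fnn: "\<And>S. S \<in> Pow ?N \<Longrightarrow> f S \<ge> 0" using nn unfolding nonneg_setfun_def by auto
  have ub: "(\<Sum>S \<in> Pow ?N. \<theta> S * f S) \<le> (\<Sum>S \<in> Pow ?N. f S)" if cf: "concave_feasible n x \<theta>" for \<theta>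
  proof (rule sum_mono)
    fix S assume S: "S \<in> Pow ?N"
    have t0: "\<forall>S\<in>Pow ?N. \<theta> S \<ge> 0" and t1: "sum \<theta> (Pow ?N) = 1"
      using cf unfolding concave_feasible_def by auto
    have "\<theta> S \<le> sum \<theta> (Pow ?N)"
      by (rule member_le_sum) (use S t0 in auto)
    then have "\<theta> S \<le> 1" using t1 by simp
    then show "\<theta> S * f S \<le> f S"
      using t0 S fnn[OF S] by (intro mult_left_le_one_le) auto
  qed
  have cf': "concave_feasible n x \<theta>'" using pf unfolding pairwise_feasible_def by auto
  have vA: "v \<in> A" unfolding A_def v_def using cf' by blast
  have vB: "v \<in> B" unfolding B_def v_def using pf by blast
  have bA: "bdd_above A" unfolding A_def bdd_above_def using ub by blast
  have bB: "bdd_above B" unfolding B_def bdd_above_def using ub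
    unfolding pairwise_feasible_def by blast
  have v0: "v \<ge> 0" unfolding v_def
    using cf' fnn unfolding concave_feasible_def by (intro sum_nonneg mult_nonneg_nonneg) auto
  have "Sup A \<le> 4/3 * v"
    by (rule cSup_least) (use vA bnd in \<open>auto simp: A_def v_def\<close>)
  moreover have "v \<le> Sup B" by (rule cSup_upper[OF vB bB])
  moreover have "v \<le> Sup A" by (rule cSup_upper[OF vA bA])
  ultimately have h1: "Sup A \<le> 4/3 * Sup B" "0 \<le> Sup A" "v \<le> Sup B" using v0 by auto
  have eqs: "concave_closure n f x = Sup A" "upper_pairwise_ext n f x = Sup B"
    unfolding concave_closure_def upper_pairwise_ext_def A_def B_def by auto
  show ?thesis
  proof (intro conjI impI)
    assume "upper_pairwise_ext n f x = 0"
    then show "concave_closure n f x = 0" using h1 eqs by simp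
  next
    assume "upper_pairwise_ext n f x \<noteq> 0"
    then have "Sup B > 0" using h1 v0 eqs by auto
    then show "concave_closure n f x / upper_pairwise_ext n f x \<le> 4/3"
      using h1 eqs by (simp add: divide_le_eq)
  qed
qed

lemma cf_m1:
  assumes "concave_feasible n x \<theta>" "i \<in> {1..n}"
  shows "(\<Sum>S\<in>Pow {1..n}. \<theta> S * of_bool (i \<in> S)) = x i"
proof -
  have "sum \<theta> {S\<in>Pow {1..n}. i \<in> S} = x i" using assms unfolding concave_feasible_def by blast
  then show ?thesis by (simp only: filt[OF finite_Pow_iff[THEN iffD2, OF finite_atLeastAtMost]])
qed

lemma cf_m0:
  assumes "concave_feasible n x \<theta>" "i \<in> {1..n}"
  shows "(\<Sum>S\<in>Pow {1..n}. \<theta> S * of_bool (i \<notin> S)) = 1 - x i"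
proof -
  have "(\<Sum>S\<in>Pow {1..n}. \<theta> S * of_bool (i \<notin> S)) =
        (\<Sum>S\<in>Pow {1..n}. \<theta> S - \<theta> S * of_bool (i \<in> S))"
    by (intro sum.cong) auto
  also have "\<dots> = 1 - x i" using cf_m1[OF assms] assms(1)
    unfolding concave_feasible_def by (simp add: sum_subtractf)
  finally show ?thesis .
qed

lemma upper1:
  assumes sm: "submodular_setfun n f" and cf: "concave_feasible n x \<theta>"
  shows "(\<Sum>S\<in>Pow {1..n}. \<theta> S * f S) \<le> f {} + (\<Sum>i\<in>{1..n}. x i * (f {i} - f {}))"
proof -
  let ?N = "{1..n::nat}"
  let ?D = "\<lambda>i. f {i} - f {}"
  have t0: "\<forall>S\<in>Pow ?N. \<theta> S \<ge> 0" and t1: "sum \<theta> (Pow ?N) = 1"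
    using cf unfolding concave_feasible_def by auto
  have "(\<Sum>S\<in>Pow ?N. \<theta> S * f S) \<le> (\<Sum>S\<in>Pow ?N. \<theta> S * (f {} + (\<Sum>i\<in>?N. ?D i * of_bool (i \<in> S))))"
  proof (rule sum_mono)
    fix S assume S: "S \<in> Pow ?N"
    have "(\<Sum>i\<in>?N. ?D i * of_bool (i \<in> S)) = sum ?D {i\<in>?N. i \<in> S}"
      by (simp only: filt[OF finite_atLeastAtMost])
    also have "{i\<in>?N. i \<in> S} = S" using S by auto
    finally have "f S \<le> f {} + (\<Sum>i\<in>?N. ?D i * of_bool (i \<in> S))"
      using sub_up[OF sm, of S] S by simp
    then show "\<theta> S * f S \<le> \<theta> S * (f {} + (\<Sum>i\<in>?N. ?D i * of_bool (i \<in> S)))"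
      using t0 S by (intro mult_left_mono) auto
  qed
  also have "\<dots> = f {} * sum \<theta> (Pow ?N) + (\<Sum>S\<in>Pow ?N. \<Sum>i\<in>?N. ?D i * (\<theta> S * of_bool (i \<in> S)))"
    by (simp add: distrib_left sum.distrib sum_distrib_left sum_distrib_right mult_ac del: sum_mult_of_bool_eq sum_of_bool_mult_eq sum_of_bool_eq)
  also have "(\<Sum>S\<in>Pow ?N. \<Sum>i\<in>?N. ?D i * (\<theta> S * of_bool (i \<in> S))) =
      (\<Sum>i\<in>?N. ?D i * (\<Sum>S\<in>Pow ?N. \<theta> S * of_bool (i \<in> S)))"
    by (subst sum.swap) (simp add: sum_distrib_left del: sum_mult_of_bool_eq sum_of_bool_mult_eq sum_of_bool_eq)
  also have "\<dots> = (\<Sum>i\<in>?N. x i * ?D i)"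
    using cf_m1[OF cf] by (intro sum.cong) auto
  finally show ?thesis using t1 by simp
qed

lemma upper2:
  assumes sm: "submodular_setfun n f" and cf: "concave_feasible n x \<theta>"
  shows "(\<Sum>S\<in>Pow {1..n}. \<theta> S * f S) \<le> f {1..n} - (\<Sum>i\<in>{1..n}. (1 - x i) * (f {1..n} - f ({1..n} - {i})))"
proof -
  let ?N = "{1..n::nat}"
  let ?D = "\<lambda>i. f ?N - f (?N - {i})"
  have t0: "\<forall>S\<in>Pow ?N. \<theta> S \<ge> 0" and t1: "sum \<theta> (Pow ?N) = 1"
    using cf unfolding concave_feasible_def by auto
  have "(\<Sum>S\<in>Pow ?N. \<theta> S * f S) \<le> (\<Sum>S\<in>Pow ?N. \<theta> S * (f ?N - (\<Sum>i\<in>?N. ?D i * of_bool (i \<notin> S))))"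
  proof (rule sum_mono)
    fix S assume S: "S \<in> Pow ?N"
    have "(\<Sum>i\<in>?N. ?D i * of_bool (i \<notin> S)) = sum ?D {i\<in>?N. i \<notin> S}"
      by (simp only: filt[OF finite_atLeastAtMost])
    also have "{i\<in>?N. i \<notin> S} = ?N - S" by auto
    finally have "f S \<le> f ?N - (\<Sum>i\<in>?N. ?D i * of_bool (i \<notin> S))"
      using sub_down[OF sm, of "?N - S"] S by (simp add: Diff_Diff_Int Int_absorb1)
    then show "\<theta> S * f S \<le> \<theta> S * (f ?N - (\<Sum>i\<in>?N. ?D i * of_bool (i \<notin> S)))"
      using t0 S by (intro mult_left_mono) auto
  qed
  also have "\<dots> = f ?N * sum \<theta> (Pow ?N) - (\<Sum>S\<in>Pow ?N. \<Sum>i\<in>?N. ?D i * (\<theta> S * of_bool (i \<notin> S)))"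
    by (simp add: right_diff_distrib sum_subtractf sum_distrib_left sum_distrib_right mult_ac del: sum_mult_of_bool_eq sum_of_bool_mult_eq sum_of_bool_eq)
  also have "(\<Sum>S\<in>Pow ?N. \<Sum>i\<in>?N. ?D i * (\<theta> S * of_bool (i \<notin> S))) =
      (\<Sum>i\<in>?N. ?D i * (\<Sum>S\<in>Pow ?N. \<theta> S * of_bool (i \<notin> S)))"
    by (subst sum.swap) (simp add: sum_distrib_left del: sum_mult_of_bool_eq sum_of_bool_mult_eq sum_of_bool_eq)
  also have "\<dots> = (\<Sum>i\<in>?N. (1 - x i) * ?D i)"
    using cf_m0[OF cf] by (intro sum.cong) auto
  finally show ?thesis using t1 by simp
qed


declare sum_mult_of_bool_eq[simp del] sum_of_bool_mult_eq[simp del] sum_of_bool_eq[simp del]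

lemma reidx:
  fixes h :: "nat set \<Rightarrow> real"
  assumes "finite N"
  shows "(\<Sum>S\<in>Pow N. h (N - S)) = (\<Sum>C\<in>Pow N. h C)"
proof -
  have "bij_betw (\<lambda>S. N - S) (Pow N) (Pow N)"
    by (rule bij_betw_byWitness[where f'="\<lambda>S. N - S"]) auto
  then show ?thesis by (rule sum.reindex_bij_betw)
qed

lemma case1:
  assumes n2: "n \<ge> 2" and nn: "nonneg_setfun n f" and mo: "monotone_setfun n f"
    and sm: "submodular_setfun n f"
    and xr: "\<forall>i\<in>{1..n}. 0 \<le> x i \<and> x i \<le> 1" and srt: "\<forall>i\<in>{1..<n}. x i \<le> x (i+1)"
    and s1: "(\<Sum>i=1..n-1. x i) \<le> 1" and xn: "x n \<le> 1/4"
  shows "\<exists>\<theta>'. pairwise_feasible n x \<theta>' \<and> (\<forall>\<theta>. concave_feasible n x \<theta> \<longrightarrow>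
       (\<Sum>S\<in>Pow {1..n}. \<theta> S * f S) \<le> 4/3 * (\<Sum>S\<in>Pow {1..n}. \<theta>' S * f S))"
proof -
  let ?N = "{1..n::nat}"
  define b where "b = x n"
  have zb: "0 \<le> x i \<and> x i \<le> b" if "i \<in> ?N" for i
    using that xr chain[OF srt, of i n] unfolding b_def by auto
  have b0: "0 \<le> b" using xr n2 unfolding b_def by auto
  have b1: "b \<le> 1/4" using xn b_def by simp
  have sN: "sum x ?N = sum x {1..n-1} + x n"
  proof -
    obtain m where m: "n = Suc m" using n2 by (cases n) auto
    show ?thesis unfolding m by (simp add: sum.cl_ivl_Suc)
  qed
  have "sum x ?N \<le> 1 + b" using sN s1 b_def by simp
  then have "(1-b) * sum x ?N \<le> (1-b) * (1+b)" using b1 by (intro mult_left_mono) auto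
  then have tot: "b^2 + (1-b) * sum x ?N \<le> 1" by (simp add: power2_eq_square algebra_simps)
  interpret D: distc ?N b x
    by unfold_locales (use zb b0 b1 tot in auto)
  define \<theta>' where "\<theta>' = Dist ?N b x"
  have pf: "pairwise_feasible n x \<theta>'"
    unfolding pairwise_feasible_def concave_feasible_def
  proof (intro conjI ballI impI)
    show "\<And>S. S \<in> Pow ?N \<Longrightarrow> 0 \<le> \<theta>' S" unfolding \<theta>'_def using D.Dist_nonneg by auto
    show "sum \<theta>' (Pow ?N) = 1" unfolding \<theta>'_def by (rule D.Dist_total)
    show "sum \<theta>' {S \<in> Pow ?N. i \<in> S} = x i" if "i \<in> ?N" for i
      unfolding \<theta>'_def filt[OF finite_Pow_iff[THEN iffD2, OF finite_atLeastAtMost]]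
      using D.Dist_m1[OF that] .
    show "sum \<theta>' {S \<in> Pow ?N. i \<in> S \<and> j \<in> S} = x i * x j" if "i \<in> ?N" "j \<in> ?N" "i < j" for i j
      unfolding \<theta>'_def filt[OF finite_Pow_iff[THEN iffD2, OF finite_atLeastAtMost]]
      using D.Dist_m2[OF that(1,2)] that(3) by simp
  qed
  have f0: "f {} \<ge> 0" using nn unfolding nonneg_setfun_def by auto
  have fmono: "f {} \<le> f C" if "C \<subseteq> ?N" for C using mo that unfolding monotone_setfun_def by auto
  have P1: "(\<Sum>C\<in>Pow ?N. prodw ?N (\<lambda>i. x i / b) C * f C) \<ge> (\<Sum>C\<in>Pow ?N. prodw ?N (\<lambda>i. x i / b) C * f {})"
    using D.prodw_nonneg fmono by (intro sum_mono mult_left_mono) auto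
  have P2: "(\<Sum>C\<in>Pow ?N. prodw ?N (\<lambda>i. x i / b) C * f {}) = f {}"
    using prodw_K[of ?N "{}" "\<lambda>i. x i / b"] by (simp add: sum_distrib_right[symmetric])
  define T where "T = (\<Sum>i\<in>?N. x i * (f {i} - f {}))"
  have T0: "T \<ge> 0" unfolding T_def
    using zb fmono by (intro sum_nonneg mult_nonneg_nonneg) auto
  have TT: "(\<Sum>i\<in>?N. (1-b) * x i * f {i}) - (1-b) * sum x ?N * f {} = (1-b) * T"
  proof -
    have "(1-b) * sum x ?N * f {} = (\<Sum>i\<in>?N. (1-b) * x i * f {})"
      by (simp add: sum_distrib_left sum_distrib_right)
    then have "(\<Sum>i\<in>?N. (1-b) * x i * f {i}) - (1-b) * sum x ?N * f {}
        = (\<Sum>i\<in>?N. (1-b) * x i * f {i} - (1-b) * x i * f {})"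
      by (simp add: sum_subtractf)
    also have "\<dots> = (\<Sum>i\<in>?N. (1-b) * (x i * (f {i} - f {})))"
      by (intro sum.cong) (auto simp: algebra_simps)
    also have "\<dots> = (1-b) * T" unfolding T_def by (simp add: sum_distrib_left)
    finally show ?thesis .
  qed
  have val: "(\<Sum>S\<in>Pow ?N. \<theta>' S * f S) \<ge> f {} + (1-b) * T"
    unfolding \<theta>'_def dist_sum[OF finite_atLeastAtMost] using P1 P2 TT b0
    by (simp add: algebra_simps power2_eq_square) (smt (verit) mult_left_mono zero_le_square)
  have key: "f {} + T \<le> 4/3 * (f {} + (1-b) * T)"
  proof -
    have "0 \<le> (1/3 - 4/3*b) * T" using b1 T0 by (intro mult_nonneg_nonneg) auto
    then show ?thesis using f0 by (simp add: algebra_simps)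
  qed
  show ?thesis
  proof (intro exI[of _ \<theta>'] conjI allI impI pf)
    fix \<theta> assume cf: "concave_feasible n x \<theta>"
    have "(\<Sum>S\<in>Pow ?N. \<theta> S * f S) \<le> f {} + T" using upper1[OF sm cf] T_def by simp
    also have "\<dots> \<le> 4/3 * (\<Sum>S\<in>Pow ?N. \<theta>' S * f S)" using key val by simp
    finally show "(\<Sum>S\<in>Pow ?N. \<theta> S * f S) \<le> 4/3 * (\<Sum>S\<in>Pow ?N. \<theta>' S * f S)" .
  qed
qed


lemma case2:
  assumes n2: "n \<ge> 2" and nn: "nonneg_setfun n f" and mo: "monotone_setfun n f"
    and sm: "submodular_setfun n f"
    and xr: "\<forall>i\<in>{1..n}. 0 \<le> x i \<and> x i \<le> 1" and srt: "\<forall>i\<in>{1..<n}. x i \<le> x (i+1)"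
    and s1: "(\<Sum>i=2..n. x i) \<ge> real n - 2" and x1: "x 1 \<ge> 3/4"
  shows "\<exists>\<theta>'. pairwise_feasible n x \<theta>' \<and> (\<forall>\<theta>. concave_feasible n x \<theta> \<longrightarrow>
       (\<Sum>S\<in>Pow {1..n}. \<theta> S * f S) \<le> 4/3 * (\<Sum>S\<in>Pow {1..n}. \<theta>' S * f S))"
proof -
  let ?N = "{1..n::nat}"
  define b where "b = 1 - x 1"
  define z where "z = (\<lambda>i. 1 - x i)"
  have zb: "0 \<le> z i \<and> z i \<le> b" if "i \<in> ?N" for i
    using that xr chain[OF srt, of 1 i] unfolding b_def z_def by auto
  have b0: "0 \<le> b" using xr n2 unfolding b_def by auto
  have b1: "b \<le> 1/4" using x1 b_def by simp
  have sN: "sum z ?N = z 1 + sum z {2..n}"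
    using n2 by (simp add: sum.atLeast_Suc_atMost numeral_2_eq_2)
  have c2: "card {2..n} = n - 1" by simp
  have "sum z {2..n} = real (n - 1) - sum x {2..n}"
    unfolding z_def by (simp add: sum_subtractf c2)
  also have "real (n - 1) = real n - 1" using n2 by simp
  finally have "sum z {2..n} \<le> 1" using s1 by simp
  then have "sum z ?N \<le> 1 + b" using sN b_def z_def by simp
  then have "(1-b) * sum z ?N \<le> (1-b) * (1+b)" using b1 by (intro mult_left_mono) auto
  then have tot: "b^2 + (1-b) * sum z ?N \<le> 1" by (simp add: power2_eq_square algebra_simps)
  interpret D: distc ?N b z
    by unfold_locales (use zb b0 b1 tot in auto)
  define \<theta>' where "\<theta>' = (\<lambda>S. Dist ?N b z (?N - S))"
  have finP: "finite (Pow ?N)" by simp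
  have re: "(\<Sum>S\<in>Pow ?N. \<theta>' S * g S) = (\<Sum>C\<in>Pow ?N. Dist ?N b z C * g (?N - C))" for g
  proof -
    have "(\<Sum>S\<in>Pow ?N. \<theta>' S * g S) = (\<Sum>S\<in>Pow ?N. (\<lambda>C. Dist ?N b z C * g (?N - C)) (?N - S))"
      unfolding \<theta>'_def by (intro sum.cong) (auto simp: Diff_Diff_Int Int_absorb1)
    also have "\<dots> = (\<Sum>C\<in>Pow ?N. Dist ?N b z C * g (?N - C))"
      by (rule reidx) simp
    finally show ?thesis .
  qed
  have pf: "pairwise_feasible n x \<theta>'"
    unfolding pairwise_feasible_def concave_feasible_def
  proof (intro conjI ballI impI)
    show "\<And>S. S \<in> Pow ?N \<Longrightarrow> 0 \<le> \<theta>' S" unfolding \<theta>'_def using D.Dist_nonneg by auto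
    show "sum \<theta>' (Pow ?N) = 1"
      using re[of "\<lambda>_. 1"] D.Dist_total by simp
    show "sum \<theta>' {S \<in> Pow ?N. i \<in> S} = x i" if i: "i \<in> ?N" for i
    proof -
      have "sum \<theta>' {S \<in> Pow ?N. i \<in> S} = (\<Sum>C\<in>Pow ?N. Dist ?N b z C * of_bool (i \<in> ?N - C))"
        unfolding filt[OF finP] re ..
      also have "\<dots> = (\<Sum>C\<in>Pow ?N. Dist ?N b z C - Dist ?N b z C * of_bool (i \<in> C))"
        using i by (intro sum.cong) auto
      also have "\<dots> = 1 - z i" using D.Dist_total D.Dist_m1[OF i] by (simp add: sum_subtractf)
      finally show ?thesis unfolding z_def by simp
    qed
    show "sum \<theta>' {S \<in> Pow ?N. i \<in> S \<and> j \<in> S} = x i * x j" if ij: "i \<in> ?N" "j \<in> ?N" "i < j" for i j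
    proof -
      have "sum \<theta>' {S \<in> Pow ?N. i \<in> S \<and> j \<in> S} = (\<Sum>C\<in>Pow ?N. Dist ?N b z C * of_bool (i \<in> ?N - C \<and> j \<in> ?N - C))"
        unfolding filt[OF finP] re ..
      also have "\<dots> = (\<Sum>C\<in>Pow ?N. Dist ?N b z C - Dist ?N b z C * of_bool (i \<in> C)
             - Dist ?N b z C * of_bool (j \<in> C) + Dist ?N b z C * of_bool (i \<in> C \<and> j \<in> C))"
        using ij by (intro sum.cong) auto
      also have "\<dots> = 1 - z i - z j + z i * z j"
        using D.Dist_total D.Dist_m1[OF ij(1)] D.Dist_m1[OF ij(2)] D.Dist_m2[OF ij(1,2)] ij(3)
        by (simp add: sum_subtractf sum.distrib)
      finally show ?thesis unfolding z_def by (simp add: algebra_simps)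
    qed
  qed
  have fnn: "f C \<ge> 0" if "C \<subseteq> ?N" for C using nn that unfolding nonneg_setfun_def by auto
  have fmono: "f C \<le> f ?N" if "C \<subseteq> ?N" for C using mo that unfolding monotone_setfun_def by auto
  have P1: "(\<Sum>C\<in>Pow ?N. prodw ?N (\<lambda>i. z i / b) C * f (?N - C)) \<ge> 0"
    using D.prodw_nonneg fnn by (intro sum_nonneg mult_nonneg_nonneg) auto
  define T where "T = (\<Sum>i\<in>?N. z i * (f ?N - f (?N - {i})))"
  have T0: "T \<ge> 0" unfolding T_def
    using zb fmono by (intro sum_nonneg mult_nonneg_nonneg) auto
  have "T \<le> (\<Sum>i\<in>?N. f ?N - f (?N - {i}))" unfolding T_def
  proof (rule sum_mono)
    fix i assume i: "i \<in> ?N"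
    have "z i \<le> 1" using zb[OF i] b1 by simp
    moreover have "0 \<le> f ?N - f (?N - {i})" using fmono[of "?N - {i}"] by auto
    ultimately show "z i * (f ?N - f (?N - {i})) \<le> f ?N - f (?N - {i})"
      by (intro mult_left_le_one_le) (use zb[OF i] in auto)
  qed
  also have "\<dots> \<le> f ?N" using sub_down[OF sm, of ?N] fnn[of "{}"] by simp
  finally have TN: "T \<le> f ?N" .
  have TT: "(\<Sum>i\<in>?N. (1-b) * z i * f (?N - {i})) + (1 - b^2 - (1-b) * sum z ?N) * f ?N
      = (1 - b^2) * f ?N - (1-b) * T"
  proof -
    have "(1-b) * sum z ?N * f ?N = (\<Sum>i\<in>?N. (1-b) * z i * f ?N)"
      by (simp add: sum_distrib_left sum_distrib_right)
    moreover have "(\<Sum>i\<in>?N. (1-b) * z i * f ?N) - (\<Sum>i\<in>?N. (1-b) * z i * f (?N - {i}))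
        = (\<Sum>i\<in>?N. (1-b) * z i * f ?N - (1-b) * z i * f (?N - {i}))"
      by (simp add: sum_subtractf)
    moreover have "\<dots> = (1-b) * T" unfolding T_def
      by (simp add: sum_distrib_left algebra_simps)
    ultimately show ?thesis by (simp add: algebra_simps)
  qed
  have val: "(\<Sum>S\<in>Pow ?N. \<theta>' S * f S) \<ge> (1 - b^2) * f ?N - (1-b) * T"
    unfolding re dist_sum[OF finite_atLeastAtMost] using P1 TT b0
    by (smt (verit) Diff_empty mult_nonneg_nonneg zero_le_power2)
  have key: "f ?N - T \<le> 4/3 * ((1 - b^2) * f ?N - (1-b) * T)"
  proof -
    have "(1/4 - b) * T \<le> (1/4 - b) * f ?N" using b1 TN by (intro mult_left_mono) auto
    moreover have "b^2 \<le> b" using b0 b1 by (simp add: power2_eq_square mult_le_cancel_right1 mult_left_le_one_le)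
    moreover have "0 \<le> f ?N" using fnn by simp
    ultimately have "(1/4 - b) * T \<le> (1/4 - b^2) * f ?N"
      by (smt (verit) mult_right_mono)
    then show ?thesis by (simp add: algebra_simps)
  qed
  show ?thesis
  proof (intro exI[of _ \<theta>'] conjI allI impI pf)
    fix \<theta> assume cf: "concave_feasible n x \<theta>"
    have "(\<Sum>S\<in>Pow ?N. \<theta> S * f S) \<le> f ?N - T" using upper2[OF sm cf] T_def z_def by simp
    also have "\<dots> \<le> 4/3 * (\<Sum>S\<in>Pow ?N. \<theta>' S * f S)" using key val by simp
    finally show "(\<Sum>S\<in>Pow ?N. \<theta> S * f S) \<le> 4/3 * (\<Sum>S\<in>Pow ?N. \<theta>' S * f S)" .
  qed
qed


theorem mainTheorem11:
  fixes n :: nat and f :: "nat set \<Rightarrow> real" and x :: "nat \<Rightarrow> real"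
  assumes "n \<ge> 2"
    and "nonneg_setfun n f" and "monotone_setfun n f" and "submodular_setfun n f"
    and "\<forall>i \<in> {1..n}. 0 \<le> x i \<and> x i \<le> 1"
    and "\<forall>i \<in> {1..<n}. x i \<le> x (i + 1)"
    and "((\<Sum>i = 1..n-1. x i) \<le> 1 \<and> x n \<le> 1/4) \<or>
         ((\<Sum>i = 2..n. x i) \<ge> real n - 2 \<and> x 1 \<ge> 3/4)"
  shows "(upper_pairwise_ext n f x = 0 \<longrightarrow> concave_closure n f x = 0) \<and>
         (upper_pairwise_ext n f x \<noteq> 0 \<longrightarrow>
            concave_closure n f x / upper_pairwise_ext n f x \<le> 4/3)"
proof -
  obtain \<theta>' where "pairwise_feasible n x \<theta>'" and "\<forall>\<theta>. concave_feasible n x \<theta> \<longrightarrow>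
       (\<Sum>S\<in>Pow {1..n}. \<theta> S * f S) \<le> 4/3 * (\<Sum>S\<in>Pow {1..n}. \<theta>' S * f S)"
    using assms(7) case1[OF assms(1-6)] case2[OF assms(1-6)] by blast
  then show ?thesis using final[OF assms(2)] by blast
qed

end
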